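(* Let $q>0$. There is no finite positive Borel measure $\mu$ on $\overline{\mathbb{D}}$ and constant $C>0$ such that $\|f\|_{\mathcal{B}}\le C\|f\|_{L^q(\overline{\mathbb{D}},\mu)}$ for all $f\in\mathcal{B}\cap C(\overline{\mathbb{D}})$. Consequently, the same holds with $\mathcal{B}$ replaced by $\mathrm{BMOA}(\mathbb{D})$ or by $H^\infty(\mathbb{D})$ (with their respective norms).
   Context: The Bloch space $\mathcal{B}$ consists of holomorphic $f$ on $\mathbb{D}$ with $\|f\|_{\mathcal{B}}=|f(0)|+\sup_{z\in\mathbb{D}}(1-|z|^2)|f'(z)|<\infty$. $\mathrm{BMOA}(\mathbb{D})$ consists of holomorphic $f$ on $\mathbb{D}$ (in $H^1$) with $\sup_I\frac1{|I|}\int_I|f(e^{it})-f_I|\,dt<\infty$, the supremum over arcs $I\subset\partial\mathbb{D}$ and $f_I=\frac1{|I|}\int_If$; $H^\infty(\mathbb{D})$ is the space of bounded holomorphic functions on $\mathbb{D}$ with the sup norm. *)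

theory Defs
  imports "HOL-Analysis.Analysis"
begin

definition finite_Borel_measure_on_closed_disc :: "complex measure \<Rightarrow> bool" where
  "finite_Borel_measure_on_closed_disc M \<longleftrightarrow>
     sets M = sets (restrict_space borel (cball (0::complex) 1)) \<and> finite_measure M"

text \<open>The L^q quasi-norm (q > 0) with respect to a measure on the closed disc.
  For the functions considered (continuous on the closed disc) the integral is finite.\<close>

definition Lq_norm :: "complex measure \<Rightarrow> real \<Rightarrow> (complex \<Rightarrow> complex) \<Rightarrow> real" where
  "Lq_norm M q f = (enn2real (\<integral>\<^sup>+ z. ennreal (cmod (f z) powr q) \<partial>M)) powr (1 / q)"

definition bloch_seminorm :: "(complex \<Rightarrow> complex) \<Rightarrow> real" where
  "bloch_seminorm f = (SUP z\<in>ball 0 1. (1 - (cmod z)\<^sup>2) * cmod (deriv f z))"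

definition bloch_norm :: "(complex \<Rightarrow> complex) \<Rightarrow> real" where
  "bloch_norm f = cmod (f 0) + bloch_seminorm f"

definition bloch_space :: "(complex \<Rightarrow> complex) set" where
  "bloch_space = {f. f holomorphic_on ball 0 1 \<and>
      bdd_above ((\<lambda>z. (1 - (cmod z)\<^sup>2) * cmod (deriv f z)) ` ball 0 1)}"

text \<open>BMOA, for functions continuous on the closed disc (whose boundary function is
  then simply t \<mapsto> f(e^{it})).  Arcs of the circle are parametrised as
  {e^{it} : a \<le> t \<le> a + l} with 0 < l \<le> 2\<pi>; |I| = l is the arc length
  and dt is arc-length measure.\<close>

definition arc_mean :: "(complex \<Rightarrow> complex) \<Rightarrow> real \<Rightarrow> real \<Rightarrow> complex" where
  "arc_mean f a l = integral {a..a+l} (\<lambda>t. f (cis t)) / of_real l"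

definition arc_oscillation :: "(complex \<Rightarrow> complex) \<Rightarrow> real \<Rightarrow> real \<Rightarrow> real" where
  "arc_oscillation f a l = integral {a..a+l} (\<lambda>t. cmod (f (cis t) - arc_mean f a l)) / l"

definition arcs :: "(real \<times> real) set" where
  "arcs = {(a, l). 0 < l \<and> l \<le> 2 * pi}"

definition bmoa_seminorm :: "(complex \<Rightarrow> complex) \<Rightarrow> real" where
  "bmoa_seminorm f = (SUP (a, l)\<in>arcs. arc_oscillation f a l)"

definition bmoa_norm :: "(complex \<Rightarrow> complex) \<Rightarrow> real" where
  "bmoa_norm f = cmod (f 0) + bmoa_seminorm f"

definition bmoa_cont :: "(complex \<Rightarrow> complex) set" where
  "bmoa_cont = {f. f holomorphic_on ball 0 1 \<and> continuous_on (cball 0 1) f \<and>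
      bdd_above ((\<lambda>(a, l). arc_oscillation f a l) ` arcs)}"

definition hinf_space :: "(complex \<Rightarrow> complex) set" where
  "hinf_space = {f. f holomorphic_on ball 0 1 \<and> bdd_above ((\<lambda>z. cmod (f z)) ` ball 0 1)}"

definition hinf_norm :: "(complex \<Rightarrow> complex) \<Rightarrow> real" where
  "hinf_norm f = (SUP z\<in>ball 0 1. cmod (f z))"

definition cont_closed_disc :: "(complex \<Rightarrow> complex) set" where
  "cont_closed_disc = {f. continuous_on (cball 0 1) f}"

definition reverse_Lq_estimate ::
  "(complex \<Rightarrow> complex) set \<Rightarrow> ((complex \<Rightarrow> complex) \<Rightarrow> real) \<Rightarrow> real \<Rightarrow> bool" where
  "reverse_Lq_estimate X N q \<longleftrightarrow>
     (\<exists>M C. finite_Borel_measure_on_closed_disc M \<and> C > 0 \<and>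
        (\<forall>f\<in>X \<inter> cont_closed_disc. N f \<le> C * Lq_norm M q f))"

end

theory Submission
  imports Defs
begin

lemma exp_lip:
  fixes u v :: complex
  assumes "Re u \<le> 0" "Re v \<le> 0"
  shows "cmod (exp u - exp v) \<le> cmod (u - v)"
proof -
  have "cmod (exp u - exp v) \<le> 1 * cmod (u - v)"
  proof (rule field_differentiable_bound[where S="{x. Re x \<le> 0}" and f'=exp])
    show "convex {x::complex. Re x \<le> 0}" by (rule convex_halfspace_Re_le)
    show "(exp has_field_derivative exp z) (at z within {x. Re x \<le> 0})" for z
      by (intro DERIV_subset[OF DERIV_exp]) auto
    show "cmod (exp z) \<le> 1" if "z \<in> {x. Re x \<le> 0}" for z
      using that by auto
  qed (use assms in auto)
  then show ?thesis by simp
qed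

lemma cis_taylor:
  fixes th :: real
  assumes "0 \<le> th"
  shows "cmod (cis th - 1 - \<i> * th) \<le> th * th"
proof -
  let ?f = "\<lambda>z::complex. exp (\<i> * z) - \<i> * z"
  have "cmod (?f (of_real th) - ?f 0) \<le> th * cmod (of_real th - 0)"
  proof (rule field_differentiable_bound[where S="closed_segment 0 (of_real th)"
        and f'="\<lambda>z. \<i> * exp (\<i> * z) - \<i>"])
    show "convex (closed_segment 0 (complex_of_real th))" by simp
    show "(?f has_field_derivative \<i> * exp (\<i> * z) - \<i>) (at z within closed_segment 0 (of_real th))" for z
      by (auto intro!: derivative_eq_intros)
    show "cmod (\<i> * exp (\<i> * z) - \<i>) \<le> th" if "z \<in> closed_segment 0 (complex_of_real th)" for z
    proof -
      from that obtain t where t0: "0 \<le> t" "t \<le> 1" "z = t *\<^sub>R of_real th"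
        unfolding closed_segment_def by auto
      then have t: "0 \<le> t" "t \<le> 1" "z = of_real (t * th)"
        by (auto simp: scaleR_conv_of_real)
      have "cmod (\<i> * exp (\<i> * z) - \<i>) = cmod (exp (\<i> * z) - exp 0)"
      proof -
        have "\<i> * exp (\<i> * z) - \<i> = \<i> * (exp (\<i> * z) - exp 0)" by (simp add: algebra_simps)
        then show ?thesis by (simp only: norm_mult norm_ii mult_1)
      qed
      also have "\<dots> \<le> cmod (\<i> * z - 0)" by (rule exp_lip) (auto simp: t)
      also have "\<dots> = t * th" using t assms by (simp add: norm_mult)
      also have "\<dots> \<le> th" using t assms by (simp add: mult_left_le_one_le)
      finally show ?thesis .
    qed
  qed (simp_all add: ends_in_segment)
  moreover have "?f (of_real th) - ?f 0 = cis th - 1 - \<i> * th"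
    by (simp add: cis_conv_exp mult.commute)
  ultimately show ?thesis using assms by (simp add: algebra_simps)
qed

definition F :: "complex \<Rightarrow> nat \<Rightarrow> complex \<Rightarrow> complex" where
  "F a n z = exp (of_nat n * (cnj a * z - 1))"

lemma F_norm: "cmod (F a n z) = exp (real n * (Re (cnj a * z) - 1))"
  unfolding F_def by (simp add: norm_exp_eq_Re)

lemma Re_cnj_le:
  assumes "cmod a = 1" "cmod z \<le> 1"
  shows "Re (cnj a * z) \<le> 1"
proof -
  have "Re (cnj a * z) \<le> cmod (cnj a * z)" by (rule complex_Re_le_cmod)
  also have "\<dots> \<le> 1" using assms by (simp add: norm_mult)
  finally show ?thesis .
qed

lemma Re_cnj_eq:
  assumes "cmod a = 1" "cmod z \<le> 1" "Re (cnj a * z) = 1"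
  shows "z = a"
proof -
  let ?w = "cnj a * z"
  have "cmod ?w \<le> 1" using assms by (simp add: norm_mult)
  then have "(Re ?w)^2 + (Im ?w)^2 \<le> 1"
  proof -
    have "cmod ?w ^ 2 \<le> 1" using \<open>cmod ?w \<le> 1\<close> by (simp add: power_le_one)
    then show ?thesis by (simp add: cmod_power2)
  qed
  then have "Im ?w = 0" using assms(3) by simp
  then have w: "?w = 1" using assms(3) by (simp add: complex_eq_iff)
  have "a * cnj a = 1" using assms(1) complex_norm_square[of a] by simp
  then have "z = a * ?w" by (metis mult.assoc mult_1)
  then show ?thesis using w by simp
qed

lemma F_bound:
  assumes "cmod a = 1" "cmod z \<le> 1"
  shows "cmod (F a n z) \<le> 1"
  using Re_cnj_le[OF assms] by (simp add: F_norm mult_nonneg_nonpos)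

lemma cnj_mult_self: "cmod a = 1 \<Longrightarrow> cnj a * a = 1"
  using complex_norm_square[of a] by (simp add: mult.commute)

lemma F_at_a: "cmod a = 1 \<Longrightarrow> F a n a = 1"
  unfolding F_def by (simp add: cnj_mult_self)

lemma F_lim:
  assumes "cmod a = 1" "cmod z \<le> 1" "z \<noteq> a" "q > 0"
  shows "(\<lambda>n. cmod (F a n z) powr q) \<longlonglongrightarrow> 0"
proof -
  define c where "c = Re (cnj a * z) - 1"
  have c: "c < 0" using Re_cnj_le[OF assms(1,2)] Re_cnj_eq[OF assms(1,2)] assms(3)
    unfolding c_def by fastforce
  have eq: "cmod (F a n z) = exp c ^ n" for n
    by (simp add: F_norm c_def exp_of_nat_mult[symmetric])
  have "(\<lambda>n. exp c ^ n) \<longlonglongrightarrow> 0"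
    by (rule LIMSEQ_power_zero) (use c in simp)
  then have "(\<lambda>n. cmod (F a n z)) \<longlonglongrightarrow> 0" by (simp add: eq)
  then show ?thesis
    by (rule tendsto_zero_powrI) (use assms(4) in auto)
qed

lemma Lq_to_zero:
  assumes M: "finite_Borel_measure_on_closed_disc M" and a: "cmod a = 1" "measure M {a} = 0"
    and q: "q > 0"
  shows "(\<lambda>n. Lq_norm M q (F a n)) \<longlonglongrightarrow> 0"
proof -
  have sets: "sets M = sets (restrict_space borel (cball (0::complex) 1))" and fin: "finite_measure M"
    using M unfolding finite_Borel_measure_on_closed_disc_def by auto
  interpret finite_measure M by (rule fin)
  have space: "space M = cball 0 1" using sets_eq_imp_space_eq[OF sets] by (simp add: space_restrict_space)
  define s where "s n z = cmod (F a n z) powr q" for n z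
  have measB: "s n \<in> borel_measurable borel" for n
    unfolding s_def F_def by measurable
  have meas: "s n \<in> borel_measurable M" for n
    using measurable_restrict_space1[OF measB[of n]] measurable_cong_sets[OF sets refl] by blast
  have aset: "{a} \<in> sets M"
    unfolding sets using a(1) by (subst sets_restrict_space_iff) auto
  have lim: "(\<lambda>n. integral\<^sup>L M (s n)) \<longlonglongrightarrow> integral\<^sup>L M (indicator {a})"
  proof (rule integral_dominated_convergence[where w="\<lambda>_. 1"])
    show "indicator {a} \<in> borel_measurable M" using aset by simp
    show "s n \<in> borel_measurable M" for n by (rule meas)
    show "integrable M (\<lambda>_. 1::real)" by simp
    show "AE x in M. (\<lambda>n. s n x) \<longlonglongrightarrow> indicator {a} x"
    proof (rule AE_I2)
      fix x assume "x \<in> space M"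
      then have x: "cmod x \<le> 1" by (simp add: space)
      show "(\<lambda>n. s n x) \<longlonglongrightarrow> indicator {a} x"
      proof (cases "x = a")
        case True
        then show ?thesis using a(1) by (simp add: s_def F_at_a)
      next
        case False
        then show ?thesis using F_lim[OF a(1) x False q] by (simp add: s_def)
      qed
    qed
    show "AE x in M. norm (s n x) \<le> 1" for n
    proof (rule AE_I2)
      fix x assume "x \<in> space M"
      then have x: "cmod x \<le> 1" by (simp add: space)
      have "cmod (F a n x) \<le> 1" by (rule F_bound[OF a(1) x])
      then show "norm (s n x) \<le> 1" unfolding s_def using q
        by (simp add: powr_le1)
    qed
  qed
  have "a \<in> space M" using a(1) by (simp add: space)
  then have "integral\<^sup>L M (indicator {a} :: complex \<Rightarrow> real) = 0"
    using a by simp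
  with lim have lim0: "(\<lambda>n. integral\<^sup>L M (s n)) \<longlonglongrightarrow> 0" by simp
  have eq: "Lq_norm M q (F a n) = (integral\<^sup>L M (s n)) powr (1 / q)" for n
  proof -
    have "enn2real (\<integral>\<^sup>+ z. ennreal (cmod (F a n z) powr q) \<partial>M) = integral\<^sup>L M (s n)"
    proof (rule enn2real_nn_integral_eq_integral)
      show "AE x in M. ennreal (cmod (F a n x) powr q) = ennreal (s n x)" by (simp add: s_def)
      show "AE x in M. 0 \<le> s n x" by (simp add: s_def)
      show "s n \<in> borel_measurable M" by (rule meas)
    qed
    then show ?thesis unfolding Lq_norm_def by simp
  qed
  show ?thesis unfolding eq
    by (rule tendsto_zero_powrI[OF lim0 tendsto_const[of "1/q"]]) (use q in \<open>auto intro!: integral_nonneg_AE simp: s_def\<close>)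
qed

lemma exists_good_a:
  assumes "finite_measure M"
  shows "\<exists>a. cmod a = 1 \<and> measure M {a} = 0"
proof (rule ccontr)
  assume H: "\<not> ?thesis"
  define g where "g x = Complex x (sqrt (1 - x^2))" for x
  have "g ` {0<..<1} \<subseteq> {x. measure M {x} \<noteq> 0}"
  proof
    fix y assume "y \<in> g ` {0<..<1}"
    then obtain x where x: "0 < x" "x < 1" "y = g x" by auto
    have "x^2 \<le> 1" using x by (simp add: power_le_one)
    then have "cmod y = 1" using x by (simp add: g_def cmod_def)
    then show "y \<in> {x. measure M {x} \<noteq> 0}" using H by auto
  qed
  then have "countable (g ` {0<..<1})"
    using finite_measure.countable_support[OF assms] countable_subset by blast
  moreover have "inj_on g {0<..<1}" by (rule inj_onI) (simp add: g_def)
  ultimately have "countable {0<..<(1::real)}" by (rule countable_image_inj_on)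
  then show False using uncountable_open_interval[of 0 "1::real"] by simp
qed

lemma generic:
  assumes q: "q > 0" and c: "c > 0"
    and H: "\<And>a n. cmod a = 1 \<Longrightarrow> n \<ge> K \<Longrightarrow> F a n \<in> X \<inter> cont_closed_disc \<and> c \<le> N (F a n)"
  shows "\<not> reverse_Lq_estimate X N q"
proof
  assume "reverse_Lq_estimate X N q"
  then obtain M C where M: "finite_Borel_measure_on_closed_disc M" and C: "C > 0"
    and est: "\<forall>f\<in>X \<inter> cont_closed_disc. N f \<le> C * Lq_norm M q f"
    unfolding reverse_Lq_estimate_def by blast
  have fin: "finite_measure M" using M unfolding finite_Borel_measure_on_closed_disc_def by auto
  obtain a where a: "cmod a = 1" "measure M {a} = 0" using exists_good_a[OF fin] by blast
  have "(\<lambda>n. C * Lq_norm M q (F a n)) \<longlonglongrightarrow> 0"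
    using tendsto_mult_right_zero[OF Lq_to_zero[OF M a q]] by simp
  from order_tendstoD(2)[OF this c] have "eventually (\<lambda>n. C * Lq_norm M q (F a n) < c) sequentially" .
  moreover have "eventually (\<lambda>n. n \<ge> K) sequentially" by (rule eventually_ge_at_top)
  ultimately have "eventually (\<lambda>n. C * Lq_norm M q (F a n) < c \<and> n \<ge> K) sequentially"
    by (rule eventually_conj)
  then obtain n where n: "C * Lq_norm M q (F a n) < c" "n \<ge> K"
    unfolding eventually_sequentially by blast
  have h1: "F a n \<in> X \<inter> cont_closed_disc" and h2: "c \<le> N (F a n)"
    using H[OF a(1) n(2)] by auto
  have "N (F a n) \<le> C * Lq_norm M q (F a n)" using bspec[OF est h1] .
  with h2 have "c \<le> C * Lq_norm M q (F a n)" by linarith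
  with n(1) show False by simp
qed

lemma F_holo: "F a n holomorphic_on S"
  unfolding F_def by (intro holomorphic_intros)

lemma F_cont: "F a n \<in> cont_closed_disc"
  unfolding cont_closed_disc_def F_def mem_Collect_eq by (intro continuous_intros)

lemma F_deriv: "deriv (F a n) z = of_nat n * cnj a * F a n z"
proof -
  have "(F a n has_field_derivative (of_nat n * cnj a * F a n z)) (at z)"
    unfolding F_def by (auto intro!: derivative_eq_intros simp: algebra_simps)
  then show ?thesis by (rule DERIV_imp_deriv)
qed

definition z0 :: "complex \<Rightarrow> nat \<Rightarrow> complex" where
  "z0 a n = (1 - 1 / real n) *\<^sub>R a"

lemma z0_norm: "cmod a = 1 \<Longrightarrow> n \<ge> 1 \<Longrightarrow> cmod (z0 a n) = 1 - 1 / real n"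
  unfolding z0_def norm_scaleR by (simp add: divide_le_eq_1)

lemma z0_ball: "cmod a = 1 \<Longrightarrow> n \<ge> 1 \<Longrightarrow> z0 a n \<in> ball 0 1"
  using z0_norm[of a n] by simp

lemma F_z0: "cmod a = 1 \<Longrightarrow> n \<ge> 1 \<Longrightarrow> cmod (F a n (z0 a n)) = exp (-1)"
proof -
  assume a: "cmod a = 1" and n: "n \<ge> 1"
  have "cnj a * z0 a n = of_real (1 - 1 / real n)"
    unfolding z0_def scaleR_conv_of_real using cnj_mult_self[OF a]
    by (metis mult.left_commute mult.right_neutral)
  then have "real n * (Re (cnj a * z0 a n) - 1) = -1" using n by simp
  then show ?thesis by (simp add: F_norm)
qed

lemma hinf_part: "\<not> reverse_Lq_estimate hinf_space hinf_norm q" if q: "q > 0"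
proof (rule generic[OF q exp_gt_zero[of "-1"], where K=1])
  fix a :: complex and n :: nat assume a: "cmod a = 1" and n: "n \<ge> 1"
  have bdd: "bdd_above ((\<lambda>z. cmod (F a n z)) ` ball 0 1)"
    by (rule bdd_aboveI[where M=1]) (use F_bound[OF a] in auto)
  have "F a n \<in> hinf_space" unfolding hinf_space_def using F_holo bdd by auto
  moreover have "exp (-1) \<le> hinf_norm (F a n)"
    unfolding hinf_norm_def using cSUP_upper[OF z0_ball[OF a n] bdd] F_z0[OF a n] by simp
  ultimately show "F a n \<in> hinf_space \<inter> cont_closed_disc \<and> exp (-1) \<le> hinf_norm (F a n)"
    using F_cont by auto
qed

lemma bloch_part: "\<not> reverse_Lq_estimate bloch_space bloch_norm q" if q: "q > 0"
proof (rule generic[OF q exp_gt_zero[of "-1"], where K=1])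
  fix a :: complex and n :: nat assume a: "cmod a = 1" and n: "n \<ge> 1"
  have bdd: "bdd_above ((\<lambda>z. (1 - (cmod z)\<^sup>2) * cmod (deriv (F a n) z)) ` ball 0 1)"
  proof (rule bdd_aboveI[where M="real n"])
    fix y assume "y \<in> (\<lambda>z. (1 - (cmod z)\<^sup>2) * cmod (deriv (F a n) z)) ` ball 0 1"
    then obtain z where z: "cmod z < 1" "y = (1 - (cmod z)\<^sup>2) * cmod (deriv (F a n) z)" by auto
    have "cmod (deriv (F a n) z) = real n * cmod (F a n z)"
      by (simp add: F_deriv norm_mult a)
    also have "\<dots> \<le> real n * 1"
      using F_bound[OF a, of z n] z(1) by (intro mult_left_mono) auto
    finally have d: "cmod (deriv (F a n) z) \<le> real n" by simp
    have A: "(1 - (cmod z)\<^sup>2) \<le> 1" "0 \<le> 1 - (cmod z)\<^sup>2" using z(1)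
      by (auto simp: power_le_one)
    have "y \<le> cmod (deriv (F a n) z)" unfolding z(2)
      by (rule mult_left_le_one_le) (use A in auto)
    then show "y \<le> real n" using d by linarith
  qed
  have "F a n \<in> bloch_space" unfolding bloch_space_def using F_holo bdd by auto
  moreover have "exp (-1) \<le> bloch_norm (F a n)"
  proof -
    let ?z = "z0 a n"
    have val: "(1 - (cmod ?z)\<^sup>2) * cmod (deriv (F a n) ?z) = (2 - 1 / real n) * exp (-1)"
    proof -
      have e: "(1 - (1 - 1/real n)^2) * real n = 2 - 1/real n" using n
        by (simp add: power2_eq_square field_simps)
      have "cmod (deriv (F a n) ?z) = real n * exp (-1)"
        by (simp add: F_deriv norm_mult a F_z0[OF a n])
      then show ?thesis using e by (simp add: z0_norm[OF a n])
    qed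
    have "exp (-1) \<le> (2 - 1 / real n) * exp (-1)" using n by (simp add: field_simps)
    also have "\<dots> \<le> bloch_seminorm (F a n)"
      unfolding bloch_seminorm_def using cSUP_upper[OF z0_ball[OF a n] bdd] val by simp
    also have "\<dots> \<le> bloch_norm (F a n)" unfolding bloch_norm_def by simp
    finally show ?thesis .
  qed
  ultimately show "F a n \<in> bloch_space \<inter> cont_closed_disc \<and> exp (-1) \<le> bloch_norm (F a n)"
    using F_cont by auto
qed

lemma osc_lower:
  fixes h :: "real \<Rightarrow> complex" and m u v :: complex
  assumes cont: "continuous_on {A..A+l} h" and l: "l > 0"
    and B1: "\<And>t. t \<in> {A..A+l/6} \<Longrightarrow> cmod (h t - u) \<le> e1"
    and B2: "\<And>t. t \<in> {A+5*l/6..A+l} \<Longrightarrow> cmod (h t - v) \<le> e2"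
  shows "l/6 * (cmod (u - v) - e1 - e2) \<le> integral {A..A+l} (\<lambda>t. cmod (h t - m))"
proof -
  let ?p = "\<lambda>t. cmod (h t - m)"
  have pc: "continuous_on {A..A+l} ?p" by (intro continuous_intros cont)
  have int: "?p integrable_on {A..A+l}" by (rule integrable_continuous_interval[OF pc])
  have int_sub: "?p integrable_on {x..y}" if "A \<le> x" "y \<le> A + l" for x y
    by (rule integrable_continuous_interval) (rule continuous_on_subset[OF pc], use that in auto)
  have c1: "integral {A..A+l/6} ?p + integral {A+l/6..A+l} ?p = integral {A..A+l} ?p"
    using Henstock_Kurzweil_Integration.integral_combine[where f="\<lambda>t. cmod (h t - m)" and a=A and c="A+l/6" and b="A+l"] l int by auto
  have c2: "integral {A+l/6..A+5*l/6} ?p + integral {A+5*l/6..A+l} ?p = integral {A+l/6..A+l} ?p"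
    using Henstock_Kurzweil_Integration.integral_combine[where f="\<lambda>t. cmod (h t - m)" and a="A+l/6" and c="A+5*l/6" and b="A+l"] l int_sub[of "A+l/6" "A+l"] by auto
  have mid: "0 \<le> integral {A+l/6..A+5*l/6} ?p"
    by (rule integral_nonneg) (use int_sub[of "A+l/6" "A+5*l/6"] l in auto)
  have I1: "l/6 * (cmod (u - m) - e1) \<le> integral {A..A+l/6} ?p"
  proof -
    have "integral {A..A+l/6} (\<lambda>_. cmod (u - m) - e1) \<le> integral {A..A+l/6} ?p"
    proof (rule integral_le)
      show "(\<lambda>_. cmod (u - m) - e1) integrable_on {A..A+l/6}" by (rule integrable_continuous_interval) (rule continuous_on_const)
      show "?p integrable_on {A..A+l/6}" by (rule int_sub) (use l in auto)
      fix t assume t: "t \<in> {A..A+l/6}"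
      have "u - m = (h t - m) - (h t - u)" by simp
      then have "cmod (u - m) \<le> cmod (h t - u) + cmod (h t - m)"
        using norm_triangle_ineq4[of "h t - m" "h t - u"] by simp
      then show "cmod (u - m) - e1 \<le> cmod (h t - m)" using B1[OF t] by linarith
    qed
    then show ?thesis using l by simp
  qed
  have I3: "l/6 * (cmod (v - m) - e2) \<le> integral {A+5*l/6..A+l} ?p"
  proof -
    have "integral {A+5*l/6..A+l} (\<lambda>_. cmod (v - m) - e2) \<le> integral {A+5*l/6..A+l} ?p"
    proof (rule integral_le)
      show "(\<lambda>_. cmod (v - m) - e2) integrable_on {A+5*l/6..A+l}" by (rule integrable_continuous_interval) (rule continuous_on_const)
      show "?p integrable_on {A+5*l/6..A+l}" by (rule int_sub) (use l in auto)
      fix t assume t: "t \<in> {A+5*l/6..A+l}"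
      have "v - m = (h t - m) - (h t - v)" by simp
      then have "cmod (v - m) \<le> cmod (h t - v) + cmod (h t - m)"
        using norm_triangle_ineq4[of "h t - m" "h t - v"] by simp
      then show "cmod (v - m) - e2 \<le> cmod (h t - m)" using B2[OF t] by linarith
    qed
    then show ?thesis using l by simp
  qed
  have tri: "cmod (u - v) \<le> cmod (u - m) + cmod (v - m)"
  proof -
    have "u - v = (u - m) - (v - m)" by simp
    then show ?thesis using norm_triangle_ineq4[of "u - m" "v - m"] by simp
  qed
  have "l/6 * (cmod (u - v) - e1 - e2) \<le> l/6 * (cmod (u - m) + cmod (v - m) - e1 - e2)"
    by (rule mult_left_mono) (use tri l in auto)
  also have "\<dots> = l/6 * (cmod (u - m) - e1) + l/6 * (cmod (v - m) - e2)"
    by (simp add: field_simps)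
  also have "\<dots> \<le> integral {A..A+l} ?p" using I1 I3 mid c1 c2 by linarith
  finally show ?thesis .
qed

lemma cis_minus_1: "0 \<le> th \<Longrightarrow> cmod (cis th - 1) \<le> th"
proof -
  assume th: "0 \<le> th"
  have "cmod (exp (\<i> * of_real th) - exp 0) \<le> cmod (\<i> * of_real th - 0)"
    by (rule exp_lip) auto
  then show ?thesis using th by (simp add: cis_conv_exp norm_mult)
qed

lemma Re_w': "real n * (cos th - 1) \<le> 0"
  by (rule mult_nonneg_nonpos) auto

lemma Re_w: "Re (of_nat n * (cis th - 1)) \<le> 0"
  using Re_w' by simp

lemma g_B1:
  assumes "0 \<le> th" "real n * th \<le> pi / 6"
  shows "cmod (exp (of_nat n * (cis th - 1)) - 1) \<le> pi / 6"
proof -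
  have "cmod (exp (of_nat n * (cis th - 1)) - exp 0) \<le> cmod (of_nat n * (cis th - 1) - 0)"
    by (rule exp_lip) (auto simp: Re_w')
  also have "\<dots> = real n * cmod (cis th - 1)" by (simp add: norm_mult)
  also have "\<dots> \<le> real n * th" by (rule mult_left_mono[OF cis_minus_1[OF assms(1)]]) simp
  finally show ?thesis using assms(2) by simp
qed

lemma g_B2:
  assumes "0 \<le> th" "5 * pi / 6 \<le> real n * th" "real n * th \<le> pi" "n \<ge> 1000"
  shows "cmod (exp (of_nat n * (cis th - 1)) - (-1)) \<le> pi / 6 + 1/50"
proof -
  have small: "real n * (th * th) \<le> 1/50"
  proof -
    have n: "real n \<ge> 1000" using assms(4) by simp
    have "real n * (th * th) * real n = (real n * th) * (real n * th)" by simp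
    also have "\<dots> \<le> pi * pi" using assms(1,3) by (intro mult_mono) auto
    also have "\<dots> \<le> 4 * 4" using pi_less_4 pi_gt_zero by (intro mult_mono) auto
    also have "\<dots> \<le> 1/50 * real n" using n by simp
    finally have "real n * (th * th) * real n \<le> 1/50 * real n" .
    then show ?thesis by (rule mult_right_le_imp_le) (use n in simp)
  qed
  let ?w = "of_nat n * (cis th - 1)"
  have m1: "exp (\<i> * of_real pi) = -1" by (simp add: cis_conv_exp[symmetric])
  have "cmod (exp ?w - exp (\<i> * of_real pi)) \<le> cmod (?w - \<i> * of_real pi)"
    by (rule exp_lip) (auto simp: Re_w')
  also have "?w - \<i> * of_real pi = of_nat n * (cis th - 1 - \<i> * of_real th) + \<i> * of_real (real n * th - pi)"
    by (simp add: algebra_simps)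
  also have "cmod \<dots> \<le> cmod (of_nat n * (cis th - 1 - \<i> * of_real th)) + cmod (\<i> * of_real (real n * th - pi))"
    by (rule norm_triangle_ineq)
  also have "\<dots> = real n * cmod (cis th - 1 - \<i> * of_real th) + \<bar>real n * th - pi\<bar>"
  proof -
    have "cmod (\<i> * complex_of_real (real n * th - pi)) = \<bar>real n * th - pi\<bar>"
      by (simp only: norm_mult norm_ii norm_of_real mult_1)
    then show ?thesis by (simp only: norm_mult norm_of_nat)
  qed
  also have "\<dots> \<le> real n * (th * th) + pi / 6"
  proof (rule add_mono)
    show "real n * cmod (cis th - 1 - \<i> * of_real th) \<le> real n * (th * th)"
      by (rule mult_left_mono[OF cis_taylor[OF assms(1)]]) simp
    show "\<bar>real n * th - pi\<bar> \<le> pi / 6" using assms(2,3) by simp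
  qed
  also have "real n * (th * th) + pi / 6 \<le> pi / 6 + 1/50" using small by simp
  finally show ?thesis by (simp only: m1)
qed

lemma osc_upper:
  fixes h :: "real \<Rightarrow> complex"
  assumes cont: "continuous_on {b..b+l} h" and l: "l > 0"
    and bd: "\<And>t. t \<in> {b..b+l} \<Longrightarrow> cmod (h t) \<le> 1"
  shows "integral {b..b+l} (\<lambda>t. cmod (h t - integral {b..b+l} h / of_real l)) / l \<le> 2"
proof -
  let ?m = "integral {b..b+l} h / of_real l"
  have "cmod (integral {b..b+l} h) \<le> integral {b..b+l} (\<lambda>_. 1::real)"
    by (rule integral_norm_bound_integral)
       (use cont bd in \<open>auto intro: integrable_continuous_interval\<close>)
  also have "\<dots> = l" using l by simp
  finally have m: "cmod ?m \<le> 1" using l by (simp add: norm_divide)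
  have "integral {b..b+l} (\<lambda>t. cmod (h t - ?m)) \<le> integral {b..b+l} (\<lambda>_. 2::real)"
  proof (rule integral_le)
    show "(\<lambda>t. cmod (h t - ?m)) integrable_on {b..b+l}"
      by (rule integrable_continuous_interval) (intro continuous_intros cont)
    show "(\<lambda>_. 2::real) integrable_on {b..b+l}"
      by (rule integrable_continuous_interval) (rule continuous_on_const)
    fix t assume t: "t \<in> {b..b+l}"
    have "cmod (h t - ?m) \<le> cmod (h t) + cmod ?m" by (rule norm_triangle_ineq4)
    then show "cmod (h t - ?m) \<le> 2" using bd[OF t] m by linarith
  qed
  also have "\<dots> = 2 * l" using l by simp
  finally show ?thesis using l by (simp add: divide_le_eq)
qed

lemma bmoa_part: "\<not> reverse_Lq_estimate bmoa_cont bmoa_norm q" if q: "q > 0"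
proof (rule generic[OF q, where c="1/10" and K=1000])
  show "(0::real) < 1/10" by simp
  fix a :: complex and n :: nat assume a: "cmod a = 1" and n: "n \<ge> 1000"
  have n0: "real n > 0" using n by simp
  define al where "al = Arg a"
  have a0: "a \<noteq> 0" using a by auto
  have acis: "cis al = a" unfolding al_def using a cis_Arg[OF a0]
    by (simp add: Complex.sgn_eq)
  have hF: "F a n (cis t) = exp (of_nat n * (cis (t - al) - 1))" for t
  proof -
    have "cnj a * cis t = cis (t - al)"
      by (subst acis[symmetric]) (simp add: cis_cnj cis_mult)
    then show ?thesis by (simp add: F_def)
  qed
  have hb: "cmod (F a n (cis t)) \<le> 1" for t by (rule F_bound[OF a]) simp
  have hc: "continuous_on S (\<lambda>t. F a n (cis t))" for S
    unfolding F_def by (intro continuous_intros)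
  have bdd: "bdd_above ((\<lambda>(b, l). arc_oscillation (F a n) b l) ` arcs)"
  proof (rule bdd_aboveI[where M=2])
    fix y assume "y \<in> (\<lambda>(b, l). arc_oscillation (F a n) b l) ` arcs"
    then obtain b l where bl: "l > 0" "y = arc_oscillation (F a n) b l"
      unfolding arcs_def by auto
    show "y \<le> 2" unfolding bl arc_oscillation_def arc_mean_def
      by (rule osc_upper[OF hc bl(1) hb])
  qed
  have mem: "F a n \<in> bmoa_cont"
    unfolding bmoa_cont_def using F_holo F_cont bdd unfolding cont_closed_disc_def by auto
  define l where "l = pi / real n"
  have l0: "l > 0" using n0 by (simp add: l_def)
  have arc: "(al, l) \<in> arcs" unfolding arcs_def l_def using n0 pi_gt_zero
    by (auto simp: divide_le_eq)
  have lower: "l/6 * (cmod (1 - (-1)) - pi/6 - (pi/6 + 1/50))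
      \<le> integral {al..al+l} (\<lambda>t. cmod (F a n (cis t) - arc_mean (F a n) al l))"
  proof (rule osc_lower[OF hc l0])
    fix t assume t: "t \<in> {al..al+l/6}"
    have "real n * (t - al) \<le> real n * (l / 6)" using t by (intro mult_left_mono) auto
    also have "\<dots> = pi / 6" using n0 by (simp add: l_def)
    finally have "real n * (t - al) \<le> pi / 6" .
    then show "cmod (F a n (cis t) - 1) \<le> pi / 6"
      unfolding hF by (rule g_B1[rotated]) (use t in auto)
  next
    fix t assume t: "t \<in> {al+5*l/6..al+l}"
    have "real n * (5*l/6) \<le> real n * (t - al)" using t by (intro mult_left_mono) auto
    moreover have "real n * (5*l/6) = 5 * pi / 6" using n0 by (simp add: l_def)
    ultimately have t1: "5 * pi / 6 \<le> real n * (t - al)" by linarith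
    have "real n * (t - al) \<le> real n * l" using t by (intro mult_left_mono) auto
    moreover have "real n * l = pi" using n0 by (simp add: l_def)
    ultimately have t2: "real n * (t - al) \<le> pi" by linarith
    have t0: "0 \<le> t - al" using t l0 by auto
    show "cmod (F a n (cis t) - (-1)) \<le> pi / 6 + 1/50"
      unfolding hF by (rule g_B2[OF t0 t1 t2 n])
  qed
  have "1/10 \<le> (cmod (1 - (-1::complex)) - pi/6 - (pi/6 + 1/50)) / 6"
    using pi_less_4 by simp
  also have "\<dots> = (l/6 * (cmod (1 - (-1::complex)) - pi/6 - (pi/6 + 1/50))) / l"
    using l0 by simp
  also have "\<dots> \<le> integral {al..al+l} (\<lambda>t. cmod (F a n (cis t) - arc_mean (F a n) al l)) / l"
    by (rule divide_right_mono[OF lower]) (use l0 in simp)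
  also have "\<dots> = arc_oscillation (F a n) al l" unfolding arc_oscillation_def by simp
  also have "\<dots> \<le> bmoa_seminorm (F a n)"
    unfolding bmoa_seminorm_def using cSUP_upper[OF arc bdd] by simp
  also have "\<dots> \<le> bmoa_norm (F a n)" unfolding bmoa_norm_def by simp
  finally show "F a n \<in> bmoa_cont \<inter> cont_closed_disc \<and> 1/10 \<le> bmoa_norm (F a n)"
    using mem F_cont by auto
qed

theorem theorem4p1:
  fixes q :: real
  assumes "q > 0"
  shows "\<not> reverse_Lq_estimate bloch_space bloch_norm q
       \<and> \<not> reverse_Lq_estimate bmoa_cont bmoa_norm q
       \<and> \<not> reverse_Lq_estimate hinf_space hinf_norm q"
  using bloch_part[OF assms] bmoa_part[OF assms] hinf_part[OF assms] by blast

end
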